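(* Let $X$ be a graph on vertex set $V$, $|V|=n$, which may have loops (no multiple edges), with vertex degrees $d_i$ (each loop counted once), and let $\tau$ be the least eigenvalue of its adjacency matrix $A$. Let $S$ be an independent set of size $s\ge1$ containing $s_1$ vertices with loops, and put $\bar d_S=\frac1s\sum_{i\in S}d_i$, $k_S=2\bar d_S-\frac1n\sum_{i\in V}d_i$. If $k_S>\tau$, then \[ s\le n\,\frac{-\tau+\sqrt{\tau^2+4s_1\frac{k_S-\tau}{n}}}{2(k_S-\tau)}. \]
   Context: The adjacency matrix has $A_{ii}=1$ if vertex $i$ carries a loop and $0$ otherwise, and $A_{ij}=1$ for adjacent distinct $i,j$. An independent set is a set of vertices no two distinct members of which are adjacent; looped vertices may belong to it. *)

theory Defs
  imports "HOL-Analysis.Analysis"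
begin

text \<open>A graph possibly with loops on the finite vertex type 'n, given by a symmetric
  relation E; E i i means vertex i carries a loop.\<close>

definition adj_matrix :: "('n::finite \<Rightarrow> 'n \<Rightarrow> bool) \<Rightarrow> real^'n^'n" where
  "adj_matrix E = (\<chi> i j. if E i j then 1 else 0)"

definition degree :: "('n::finite \<Rightarrow> 'n \<Rightarrow> bool) \<Rightarrow> 'n \<Rightarrow> nat" where
  "degree E i = card {j. E i j}"

definition independent_set :: "('n \<Rightarrow> 'n \<Rightarrow> bool) \<Rightarrow> 'n set \<Rightarrow> bool" where
  "independent_set E S \<longleftrightarrow> (\<forall>i\<in>S. \<forall>j\<in>S. i \<noteq> j \<longrightarrow> \<not> E i j)"

definition is_eigenvalue :: "real^'n^'n \<Rightarrow> real \<Rightarrow> bool" where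
  "is_eigenvalue A c \<longleftrightarrow> (\<exists>v. v \<noteq> 0 \<and> A *v v = c *\<^sub>R v)"

definition least_eigenvalue :: "real^'n^'n \<Rightarrow> real" where
  "least_eigenvalue A = Min {c. is_eigenvalue A c}"

end

theory Submission
  imports Defs
begin

lemma alg:
  fixes n s s1 P D \<tau> K :: real
  assumes n: "n > 0" and s1: "s1 \<ge> 0" and s: "s > 0" and K: "K = 2*(P/s) - D/n - \<tau>" "K > 0"
    and h: "s1 - 2*(s/n)*P + (s/n)^2*D \<ge> \<tau> * (s - 2*(s/n)* s + (s/n)^2*n)"
  shows "s \<le> n * (- \<tau> + sqrt (\<tau>\<^sup>2 + 4 * s1 * K / n)) / (2 * K)"
proof -
  have h2: "n^2* s1 - 2* s*n*P + s^2*D \<ge> \<tau>*(s*n^2 - s^2*n)"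
  proof -
    have "n^2*(s1 - 2*(s/n)*P + (s/n)^2*D) \<ge> n^2*(\<tau> * (s - 2*(s/n)* s + (s/n)^2*n))"
      using h n by (intro mult_left_mono) auto
    moreover have "n^2*(s1 - 2*(s/n)*P + (s/n)^2*D) = n^2* s1 - 2* s*n*P + s^2*D"
      using n by (simp add: field_simps power2_eq_square)
    moreover have "n^2*(\<tau> * (s - 2*(s/n)* s + (s/n)^2*n)) = \<tau>*(s*n^2 - s^2*n)"
      using n by (simp add: field_simps power2_eq_square)
    ultimately show ?thesis by linarith
  qed
  have K1: "K* s*n = 2*P*n - D* s - \<tau>* s*n" using K n s by (simp add: field_simps)
  have "K* s^2*n = s*(K* s*n)" by (simp add: power2_eq_square)
  also have "\<dots> = s*(2*P*n - D* s - \<tau>* s*n)" using K1 by simp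
  finally have Ks: "K* s^2*n = 2* s*n*P - s^2*D - \<tau>* s^2*n"
    by (simp add: algebra_simps power2_eq_square)
  have "n*(K* s^2 + \<tau>*n* s - n* s1) \<le> 0"
    using h2 Ks by (simp add: algebra_simps power2_eq_square)
  hence q: "K* s^2 + \<tau>*n* s \<le> n* s1" using n by (simp add: mult_le_0_iff)
  have main: "2*K* s/n + \<tau> \<le> sqrt (\<tau>\<^sup>2 + 4 * s1 * K / n)"
  proof (cases "2*K* s/n + \<tau> \<le> 0")
    case True
    have "0 \<le> sqrt (\<tau>\<^sup>2 + 4 * s1 * K / n)" using s1 K n by simp
    thus ?thesis using True by linarith
  next
    case False
    have "(2*K* s/n + \<tau>)^2 \<le> \<tau>\<^sup>2 + 4 * s1 * K / n"
    proof -
      have "(2*K* s/n + \<tau>)^2 = \<tau>^2 + (4*K/n^2) * (K* s^2 + \<tau>*n* s)"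
        using n by (simp add: field_simps power2_eq_square)
      also have "\<dots> \<le> \<tau>^2 + (4*K/n^2) * (n* s1)"
        using q K n by (intro add_left_mono mult_left_mono) auto
      also have "\<dots> = \<tau>\<^sup>2 + 4 * s1 * K / n" using n by (simp add: field_simps power2_eq_square)
      finally show ?thesis .
    qed
    thus ?thesis by (rule real_le_rsqrt)
  qed
  have "s = n * (2*K* s/n + \<tau> - \<tau>) / (2*K)" using n K by (simp add: field_simps)
  also have "\<dots> \<le> n * (- \<tau> + sqrt (\<tau>\<^sup>2 + 4 * s1 * K / n)) / (2 * K)"
    using main n K by (intro divide_right_mono mult_left_mono) auto
  finally show ?thesis .
qed

lemma symm_inner:
  fixes M :: "real^'n^'n"
  assumes "\<And>i j. M$i$j = M$j$i"
  shows "x \<bullet> (M *v y) = (M *v x) \<bullet> y"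
proof -
  have "transpose M = M" using assms by (simp add: vec_eq_iff transpose_def)
  have "x \<bullet> (M *v y) = (x v* M) \<bullet> y" by (simp add: dot_lmul_matrix)
  also have "x v* M = transpose M *v x" by (simp add: transpose_matrix_vector)
  finally show ?thesis using \<open>transpose M = M\<close> by simp
qed

lemma rayleigh_min:
  fixes M :: "real^'n^'n"
  assumes sy: "\<And>i j. M$i$j = M$j$i"
  shows "\<exists>u \<mu>. u \<noteq> 0 \<and> M *v u = \<mu> *\<^sub>R u \<and> (\<forall>x. x \<bullet> (M *v x) \<ge> \<mu> * (x \<bullet> x))"
proof -
  let ?Q = "\<lambda>x::real^'n. x \<bullet> (M *v x)"
  have "continuous_on (sphere 0 1) ?Q"
    by (intro continuous_intros matrix_vector_mult_linear_continuous_on[THEN continuous_on_compose2]) auto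
  moreover have "sphere (0::real^'n) 1 \<noteq> {}" by simp
  ultimately obtain u where u: "u \<in> sphere 0 1" and umin: "\<And>y. y \<in> sphere 0 1 \<Longrightarrow> ?Q u \<le> ?Q y"
    using continuous_attains_inf[OF compact_sphere] by blast
  define \<mu> where "\<mu> = ?Q u"
  have nu: "norm u = 1" using u by simp
  have uu: "u \<bullet> u = 1" using nu by (simp add: dot_square_norm)
  have hom: "?Q x \<ge> \<mu> * (x \<bullet> x)" for x
  proof (cases "x = 0")
    case True thus ?thesis by simp
  next
    case False
    define y where "y = (1 / norm x) *\<^sub>R x"
    have "y \<in> sphere 0 1" using False by (simp add: y_def)
    hence "\<mu> \<le> ?Q y" using umin \<mu>_def by blast
    also have "?Q y = ?Q x / (norm x)^2"
      by (simp add: y_def matrix_vector_mult_scaleR power2_eq_square)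
    finally have "\<mu> * (norm x)^2 \<le> ?Q x" using False by (simp add: field_simps)
    thus ?thesis by (simp add: dot_square_norm)
  qed
  define r where "r = M *v u - \<mu> *\<^sub>R u"
  define a where "a = r \<bullet> r"
  define b where "b = ?Q r - \<mu> * (r \<bullet> r)"
  have ex: "?Q (u + t *\<^sub>R r) - \<mu> * ((u + t *\<^sub>R r) \<bullet> (u + t *\<^sub>R r)) = 2*t*a + t^2*b" for t
  proof -
    have s1: "u \<bullet> (M *v r) = (M *v u) \<bullet> r" by (rule symm_inner[OF sy])
    have "?Q (u + t *\<^sub>R r) = ?Q u + t * (u \<bullet> (M *v r)) + t * (r \<bullet> (M *v u)) + t^2 * ?Q r"
      by (simp add: matrix_vector_right_distrib matrix_vector_mult_scaleR inner_add_left inner_add_right power2_eq_square algebra_simps)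
    moreover have "(u + t *\<^sub>R r) \<bullet> (u + t *\<^sub>R r) = 1 + 2 * t * (u \<bullet> r) + t^2 * (r \<bullet> r)"
      using uu by (simp add: inner_add_left inner_add_right power2_eq_square algebra_simps inner_commute)
    moreover have "r \<bullet> (M *v u) - \<mu> * (u \<bullet> r) = a"
    proof -
      have "r \<bullet> (M *v u) - \<mu> * (u \<bullet> r) = r \<bullet> (M *v u - \<mu> *\<^sub>R u)"
        by (simp add: inner_diff_right inner_commute)
      thus ?thesis by (simp add: a_def r_def[symmetric])
    qed
    ultimately show ?thesis using s1
      apply (simp add: \<mu>_def[symmetric] b_def inner_commute algebra_simps uu power2_eq_square)
      done
  qed
  have nn: "2*t*a + t^2*b \<ge> 0" for t
    using hom[of "u + t *\<^sub>R r"] ex[of t] by linarith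
  have a0: "a \<ge> 0" by (simp add: a_def)
  have "a = 0"
  proof (rule ccontr)
    assume "a \<noteq> 0"
    hence apos: "a > 0" using a0 by simp
    define d where "d = a / (\<bar>b\<bar> + 1)"
    have dpos: "d > 0" using apos by (simp add: d_def)
    have "2*(-d)*a + (-d)^2*b \<ge> 0" by (rule nn)
    hence "d*(d*b - 2*a) \<ge> 0" by (simp add: power2_eq_square algebra_simps)
    hence "d*b - 2*a \<ge> 0" using dpos by (simp add: zero_le_mult_iff)
    moreover have "d*b \<le> d*\<bar>b\<bar>" using dpos by (intro mult_left_mono) auto
    moreover have "d*\<bar>b\<bar> < a"
    proof -
      have "d*\<bar>b\<bar> = a * (\<bar>b\<bar> / (\<bar>b\<bar>+1))" by (simp add: d_def)
      also have "\<dots> < a * 1" using apos by (intro mult_strict_left_mono) auto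
      finally show ?thesis by simp
    qed
    ultimately show False using apos by linarith
  qed
  hence "r = 0" by (simp add: a_def)
  hence "M *v u = \<mu> *\<^sub>R u" by (simp add: r_def)
  moreover have "u \<noteq> 0" using nu by auto
  ultimately show ?thesis using hom by blast
qed


lemma sum_ind1:
  fixes f :: "'n::finite \<Rightarrow> real"
  shows "(\<Sum>i\<in>UNIV. (if i \<in> S then 1 else 0) * f i) = (\<Sum>i\<in>S. f i)"
proof -
  have "(\<Sum>i\<in>UNIV. (if i \<in> S then 1 else 0) * f i) = (\<Sum>i\<in>UNIV. if i \<in> S then f i else 0)"
    by (rule sum.cong) auto
  also have "\<dots> = sum f {i\<in>UNIV. i \<in> S}" by (rule sum.inter_filter[symmetric]) simp
  finally show ?thesis by simp
qed

lemma sum_ind2: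
  fixes f :: "'n::finite \<Rightarrow> real"
  shows "(\<Sum>i\<in>UNIV. f i * (if i \<in> S then 1 else 0)) = (\<Sum>i\<in>S. f i)"
  using sum_ind1[of S f] by (simp add: mult.commute)

lemma sum_ind3:
  shows "(\<Sum>i\<in>(UNIV::'n::finite set). (if i \<in> S then 1 else 0) * (if i \<in> S then 1 else 0)) = (real (card S))"
  using sum_ind1[of S "\<lambda>i. if i \<in> S then 1 else 0"] by simp

lemma least_eig:
  fixes M :: "real^'n^'n"
  assumes sy: "\<And>i j. M$i$j = M$j$i"
  shows "x \<bullet> (M *v x) \<ge> least_eigenvalue M * (x \<bullet> x)"
proof -
  obtain u \<mu> where u: "u \<noteq> 0" "M *v u = \<mu> *\<^sub>R u"
    and hom: "\<And>x. x \<bullet> (M *v x) \<ge> \<mu> * (x \<bullet> x)"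
    using rayleigh_min[OF sy] by blast
  let ?E = "{c. is_eigenvalue M c}"
  define v where "v c = (SOME v. v \<noteq> 0 \<and> M *v v = c *\<^sub>R v)" for c
  have vE: "v c \<noteq> 0 \<and> M *v v c = c *\<^sub>R v c" if "c \<in> ?E" for c
    using that unfolding v_def is_eigenvalue_def by (metis (mono_tags, lifting) mem_Collect_eq someI_ex)
  have orth: "v c \<bullet> v d = 0" if "c \<in> ?E" "d \<in> ?E" "c \<noteq> d" for c d
  proof -
    have "c * (v c \<bullet> v d) = (M *v v c) \<bullet> v d" using vE[OF that(1)] by simp
    also have "\<dots> = v c \<bullet> (M *v v d)" using symm_inner[OF sy] by simp
    also have "\<dots> = d * (v c \<bullet> v d)" using vE[OF that(2)] by simp
    finally have "(c - d) * (v c \<bullet> v d) = 0" by (simp add: algebra_simps)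
    thus ?thesis using that(3) by simp
  qed
  have inj: "inj_on v ?E"
  proof (rule inj_onI)
    fix c d assume cd: "c \<in> ?E" "d \<in> ?E" "v c = v d"
    show "c = d"
    proof (rule ccontr)
      assume "c \<noteq> d"
      hence "v c \<bullet> v c = 0" using orth[OF cd(1,2)] cd(3) by simp
      thus False using vE[OF cd(1)] by simp
    qed
  qed
  have "pairwise orthogonal (v ` ?E)"
    unfolding pairwise_def orthogonal_def using orth by blast
  moreover have "0 \<notin> v ` ?E" using vE by auto
  ultimately have "finite (v ` ?E)"
    by (intro finiteI_independent pairwise_orthogonal_independent)
  hence fin: "finite ?E" using inj by (rule finite_imageD)
  have muE: "\<mu> \<in> ?E" using u unfolding is_eigenvalue_def by blast
  have ge: "\<mu> \<le> c" if "c \<in> ?E" for c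
  proof -
    have "\<mu> * (v c \<bullet> v c) \<le> v c \<bullet> (M *v v c)" by (rule hom)
    also have "\<dots> = c * (v c \<bullet> v c)" using vE[OF that] by simp
    finally show ?thesis using vE[OF that] by (simp add: mult_le_cancel_right)
  qed
  have "least_eigenvalue M = \<mu>"
    unfolding least_eigenvalue_def using fin muE ge by (intro Min_eqI) auto
  thus ?thesis using hom by simp
qed

theorem corollary3p4:
  fixes E :: "'n::finite \<Rightarrow> 'n \<Rightarrow> bool" and S :: "'n set"
  assumes sym: "\<And>i j. E i j \<longleftrightarrow> E j i"
    and indep: "independent_set E S"
    and s_pos: "card S \<ge> 1"
    and kS_gt: "let n = real CARD('n); s = real (card S);
                  dS = (\<Sum>i\<in>S. real (degree E i)) / s;
                  kS = 2 * dS - (\<Sum>i\<in>UNIV. real (degree E i)) / n;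
                  \<tau> = least_eigenvalue (adj_matrix E)
                in kS > \<tau>"
  shows "let n = real CARD('n); s = real (card S);
             s1 = real (card {i\<in>S. E i i});
             dS = (\<Sum>i\<in>S. real (degree E i)) / s;
             kS = 2 * dS - (\<Sum>i\<in>UNIV. real (degree E i)) / n;
             \<tau> = least_eigenvalue (adj_matrix E)
         in s \<le> n * (- \<tau> + sqrt (\<tau>\<^sup>2 + 4 * s1 * (kS - \<tau>) / n)) / (2 * (kS - \<tau>))"
proof -
  define A where "A = adj_matrix E"
  have sy: "\<And>i j. A$i$j = A$j$i" using sym by (simp add: A_def adj_matrix_def)
  define one where "one = ((\<chi> i. 1) :: real^'n)"
  define ind where "ind = ((\<chi> i. if i \<in> S then 1 else 0) :: real^'n)"
  define n where "n = real CARD('n)"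
  define s where "s = real (card S)"
  define s1 where "s1 = real (card {i\<in>S. E i i})"
  define P where "P = (\<Sum>i\<in>S. real (degree E i))"
  define D where "D = (\<Sum>i\<in>UNIV. real (degree E i))"
  define \<tau> where "\<tau> = least_eigenvalue (adj_matrix E)"
  define \<alpha> where "\<alpha> = s / n"
  have A1: "A *v one = (\<chi> i. real (degree E i))"
    by (simp add: vec_eq_iff A_def one_def adj_matrix_def matrix_vector_mult_def degree_def sum.If_cases sum_ind1 sum_ind2 sum_ind3)
  have AS: "(A *v ind)$i = real (card {j\<in>S. E i j})" for i
  proof -
    have "(A *v ind)$i = (\<Sum>j\<in>UNIV. if j \<in> {j\<in>S. E i j} then 1 else 0)"
      by (simp add: A_def ind_def adj_matrix_def matrix_vector_mult_def) (rule sum.cong, auto)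
    also have "\<dots> = real (card {j\<in>S. E i j})" using sum.inter_filter[of UNIV "\<lambda>_. (1::real)" "\<lambda>j. j \<in> {j\<in>S. E i j}", symmetric] by simp
    finally show ?thesis .
  qed
  have i1: "ind \<bullet> (A *v one) = P"
    unfolding A1 by (simp add: inner_vec_def ind_def P_def sum.If_cases sum_ind1 sum_ind2 sum_ind3)
  have i2: "one \<bullet> (A *v one) = D"
    unfolding A1 by (simp add: inner_vec_def one_def D_def)
  have i3: "ind \<bullet> (A *v ind) = s1"
  proof -
    have "ind \<bullet> (A *v ind) = (\<Sum>i\<in>S. real (card {j\<in>S. E i j}))"
      by (simp add: AS[unfolded ind_def] inner_vec_def ind_def sum.If_cases sum_ind1 sum_ind2 sum_ind3)
    also have "\<dots> = (\<Sum>i\<in>S. if E i i then 1 else 0)"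
    proof (rule sum.cong)
      fix i assume iS: "i \<in> S"
      have "{j\<in>S. E i j} = (if E i i then {i} else {})"
        using indep iS unfolding independent_set_def by auto
      thus "real (card {j\<in>S. E i j}) = (if E i i then 1 else 0)" by simp
    qed simp
    also have "\<dots> = s1" by (simp add: s1_def sum.If_cases Collect_conj_eq)
    finally show ?thesis .
  qed
  have i4: "ind \<bullet> ind = s" by (simp add: inner_vec_def ind_def s_def sum.If_cases sum_ind1 sum_ind2 sum_ind3)
  have i5: "ind \<bullet> one = s" by (simp add: inner_vec_def ind_def one_def s_def sum.If_cases sum_ind1 sum_ind2 sum_ind3)
  have i6: "one \<bullet> one = n" by (simp add: inner_vec_def one_def n_def)
  define x where "x = ind - \<alpha> *\<^sub>R one"
  have sA: "one \<bullet> (A *v ind) = ind \<bullet> (A *v one)"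
    using symm_inner[OF sy, of one ind] by (simp add: inner_commute)
  have Qx: "x \<bullet> (A *v x) = s1 - 2*\<alpha>*P + \<alpha>^2*D"
    unfolding x_def
    by (simp add: matrix_vector_mult_diff_distrib matrix_vector_mult_scaleR inner_diff_left inner_diff_right
        i1 i2 i3 sA power2_eq_square algebra_simps)
  have xx: "x \<bullet> x = s - 2*\<alpha>* s + \<alpha>^2*n"
    unfolding x_def
    by (simp add: inner_diff_left inner_diff_right i4 i5 i6 inner_commute power2_eq_square algebra_simps)
  have ray: "x \<bullet> (A *v x) \<ge> \<tau> * (x \<bullet> x)"
    using least_eig[OF sy] by (simp add: \<tau>_def A_def)
  have npos: "n > 0" by (simp add: n_def)
  have spos: "s > 0" using s_pos by (simp add: s_def)
  have s1nn: "s1 \<ge> 0" by (simp add: s1_def)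
  have Kpos: "2 * (P/s) - D/n - \<tau> > 0"
    using kS_gt by (simp add: Let_def n_def s_def P_def D_def \<tau>_def)
  have "s \<le> n * (- \<tau> + sqrt (\<tau>\<^sup>2 + 4 * s1 * (2 * (P/s) - D/n - \<tau>) / n)) / (2 * (2 * (P/s) - D/n - \<tau>))"
    by (rule alg[OF npos s1nn spos refl Kpos]) (use ray Qx xx in \<open>simp add: \<alpha>_def\<close>)
  thus ?thesis by (simp add: Let_def n_def s_def P_def D_def \<tau>_def s1_def)
qed

end
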